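(* For every integer $m\geqslant 1$, the first order binary Reed–Muller code $\mathcal R(1,m)$ is log-concave.
   Context: The binary Reed–Muller code $\mathcal R(1,m)$ is the binary linear code of length $2^m$ consisting of the evaluation vectors $(f(x))_{x\in\mathbb{F}_2^m}$ of all polynomials $f\in\mathbb{F}_2[x_1,\dots,x_m]$ of degree at most $1$. For a linear code of length $n$, $A_i$ is the number of codewords of weight $i$; the nonzero weight distribution is the subsequence $a_0,\dots,a_N$ of $A_0,\dots,A_n$ of its nonzero values, in order; the code is log-concave if $a_i^2\geqslant a_{i-1}a_{i+1}$ for all $1\leqslant i\leqslant N-1$. *)

theory Defs
  imports Main "HOL-Library.FuncSet"
begin

text \<open>Points of F_2^m: boolean vectors indexed by 0..m-1 (zero outside).\<close>
definition F2_space :: "nat \<Rightarrow> (nat \<Rightarrow> bool) set" where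
  "F2_space m = {x. \<forall>i. m \<le> i \<longrightarrow> \<not> x i}"

text \<open>A binary word of length card I is a function I -> F_2 (bool), extensional outside I.
  Hamming weight, weight distribution A_i, nonzero weight distribution, log-concavity.\<close>
definition hweight :: "'a set \<Rightarrow> ('a \<Rightarrow> bool) \<Rightarrow> nat" where
  "hweight I v = card {x \<in> I. v x}"

definition weight_count :: "('a \<Rightarrow> bool) set \<Rightarrow> 'a set \<Rightarrow> nat \<Rightarrow> nat" where
  "weight_count C I i = card {v \<in> C. hweight I v = i}"

definition nonzero_weight_distribution :: "('a \<Rightarrow> bool) set \<Rightarrow> 'a set \<Rightarrow> nat list" where
  "nonzero_weight_distribution C I =
     filter (\<lambda>a. a \<noteq> 0) (map (weight_count C I) [0..<card I + 1])"

definition log_concave_code :: "('a \<Rightarrow> bool) set \<Rightarrow> 'a set \<Rightarrow> bool" where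
  "log_concave_code C I =
     (let a = nonzero_weight_distribution C I in
      \<forall>i. 1 \<le> i \<and> i + 1 < length a \<longrightarrow> a ! (i - 1) * a ! (i + 1) \<le> (a ! i)^2)"

text \<open>R(1,m): evaluation vectors over F_2^m of f(x) = c + sum_i a_i x_i (degree <= 1).
  The sum in F_2 is the parity of the number of i < m with a_i = x_i = 1.\<close>
definition RM1 :: "nat \<Rightarrow> ((nat \<Rightarrow> bool) \<Rightarrow> bool) set" where
  "RM1 m = {restrict (\<lambda>x. c \<noteq> odd (card {i \<in> {..<m}. a i \<and> x i})) (F2_space m)
            | (a :: nat \<Rightarrow> bool) (c :: bool). True}"

end

theory Submission
  imports Defs
begin

lemma F2_fin_card: "finite (F2_space m) \<and> card (F2_space m) = 2^m"
proof -
  have b: "bij_betw (\<lambda>x. {i. x i}) (F2_space m) (Pow {..<m})"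
  proof (rule bij_betw_byWitness[where f'="\<lambda>S i. i \<in> S"])
    show "\<forall>a\<in>F2_space m. (\<lambda>i. i \<in> {i. a i}) = a" by auto
    show "\<forall>a'\<in>Pow {..<m}. {i. i \<in> a'} = a'" by auto
    show "(\<lambda>x. {i. x i}) ` F2_space m \<subseteq> Pow {..<m}"
      by (auto simp: F2_space_def) (meson not_less)
    show "(\<lambda>S i. i \<in> S) ` Pow {..<m} \<subseteq> F2_space m"
      by (auto simp: F2_space_def)
  qed
  then show ?thesis
    by (metis bij_betw_finite bij_betw_same_card card_Pow card_lessThan finite_Pow_iff finite_lessThan)
qed

lemma flip_parity:
  fixes m :: nat
  assumes "j < m" "a j"
  shows "odd (card {i\<in>{..<m}. a i \<and> (x(j := \<not> x j)) i}) \<longleftrightarrow> \<not> odd (card {i\<in>{..<m}. a i \<and> x i})"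
proof -
  let ?S = "{i\<in>{..<m}. a i \<and> x i}"
  let ?T = "{i\<in>{..<m}. a i \<and> (x(j := \<not> x j)) i}"
  have fS: "finite ?S" by (rule finite_subset[OF _ finite_lessThan[of m]]) auto
  show ?thesis
  proof (cases "x j")
    case True
    have e: "?T = ?S - {j}" using True by auto
    have "j \<in> ?S" using assms True by auto
    then have "card ?S = Suc (card (?S - {j}))" by (rule card_Suc_Diff1[OF fS, symmetric])
    then have "card ?S = Suc (card ?T)" using e by simp
    then show ?thesis by simp
  next
    case False
    have e: "?T = insert j ?S" using False assms by auto
    have "j \<notin> ?S" using False by auto
    then have "card ?T = Suc (card ?S)" using e fS by simp
    then show ?thesis by simp
  qed
qed

lemma half:
  assumes "j < m" "a j"
  shows "card {x \<in> F2_space m. odd (card {i\<in>{..<m}. a i \<and> x i})} = 2^(m-1)"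
proof -
  define Od where "Od = {x \<in> F2_space m. odd (card {i\<in>{..<m}. a i \<and> x i})}"
  define Ev where "Ev = {x \<in> F2_space m. \<not> odd (card {i\<in>{..<m}. a i \<and> x i})}"
  define fl where "fl = (\<lambda>x::nat\<Rightarrow>bool. x(j := \<not> x j))"
  have ff: "fl (fl x) = x" for x unfolding fl_def by auto
  have inF: "x \<in> F2_space m \<Longrightarrow> fl x \<in> F2_space m" for x
    using assms(1) unfolding fl_def F2_space_def by auto
  have fp: "odd (card {i\<in>{..<m}. a i \<and> fl x i}) \<longleftrightarrow> \<not> odd (card {i\<in>{..<m}. a i \<and> x i})" for x
    unfolding fl_def by (rule flip_parity[of j m a x, OF assms(1) assms(2)])
  have "bij_betw fl Od Ev"
  proof (rule bij_betw_byWitness[where f'=fl])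
    show "\<forall>a\<in>Od. fl (fl a) = a" using ff by auto
    show "\<forall>a\<in>Ev. fl (fl a) = a" using ff by auto
    show "fl ` Od \<subseteq> Ev"
    proof (rule image_subsetI)
      fix x assume "x \<in> Od"
      then show "fl x \<in> Ev" using inF[of x] fp[of x] unfolding Od_def Ev_def mem_Collect_eq by simp
    qed
    show "fl ` Ev \<subseteq> Od"
    proof (rule image_subsetI)
      fix x assume "x \<in> Ev"
      then show "fl x \<in> Od" using inF[of x] fp[of x] unfolding Od_def Ev_def mem_Collect_eq by simp
    qed
  qed
  then have c: "card Od = card Ev" by (rule bij_betw_same_card)
  have u: "Od \<union> Ev = F2_space m" and d: "Od \<inter> Ev = {}" unfolding Od_def Ev_def by auto
  have fO: "finite Od" and fE: "finite Ev" using F2_fin_card[of m] unfolding Od_def Ev_def by auto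
  have "card Od + card Ev = 2^m" using card_Un_disjoint[OF fO fE d] u F2_fin_card[of m] by simp
  moreover have "(2::nat)^m = 2 * 2^(m-1)" using assms(1) by (cases m) auto
  ultimately show ?thesis using c unfolding Od_def by simp
qed


lemma hweight_restrict: "hweight I (restrict f I) = card {x\<in>I. f x}"
  unfolding hweight_def by (rule arg_cong[where f=card]) auto

lemma wt_nonconst:
  assumes "j < m" "a j"
  shows "hweight (F2_space m) (restrict (\<lambda>x. c \<noteq> odd (card {i\<in>{..<m}. a i \<and> x i})) (F2_space m)) = 2^(m-1)"
proof (cases c)
  case False
  then show ?thesis using half[of j m a, OF assms(1) assms(2)] by (simp add: hweight_restrict)
next
  case True
  let ?O = "{x \<in> F2_space m. odd (card {i\<in>{..<m}. a i \<and> x i})}"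
  have e: "{x \<in> F2_space m. c \<noteq> odd (card {i\<in>{..<m}. a i \<and> x i})} = F2_space m - ?O"
    using True by auto
  have "finite (F2_space m)" "card (F2_space m) = 2^m" using F2_fin_card by auto
  moreover have "(2::nat)^m = 2 * 2^(m-1)" using assms(1) by (cases m) auto
  ultimately have "card (F2_space m - ?O) = 2^(m-1)"
    using half[of j m a, OF assms(1) assms(2)] by (simp add: card_Diff_subset)
  then show ?thesis using e by (simp add: hweight_restrict)
qed

lemma const_fun:
  assumes "\<forall>j<m. \<not> a j"
  shows "(\<lambda>x. c \<noteq> odd (card {i\<in>{..<m}. a i \<and> x i})) = (\<lambda>x. c)"
proof -
  show ?thesis
  proof (rule ext)
    fix x
    have e: "{i\<in>{..<m}. a i \<and> x i} = {}" using assms by auto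
    show "(c \<noteq> odd (card {i\<in>{..<m}. a i \<and> x i})) = c" by (simp only: e card.empty) simp
  qed
qed

lemma wt_const: "hweight (F2_space m) (restrict (\<lambda>x. c) (F2_space m)) = (if c then 2^m else 0)"
  using F2_fin_card[of m] by (simp add: hweight_restrict)

lemma RM1_finite: "finite (RM1 m)"
proof -
  have "RM1 m \<subseteq> PiE (F2_space m) (\<lambda>_. UNIV)" unfolding RM1_def by auto
  moreover have "finite (PiE (F2_space m) (\<lambda>_. (UNIV::bool set)))"
    using F2_fin_card[of m] by (intro finite_PiE) auto
  ultimately show ?thesis by (rule finite_subset)
qed

lemma RM1_cases:
  assumes "v \<in> RM1 m" "1 \<le> m"
  shows "hweight (F2_space m) v = 2^(m-1) \<or> v = restrict (\<lambda>x. False) (F2_space m) \<or> v = restrict (\<lambda>x. True) (F2_space m)"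
proof -
  obtain a c where v: "v = restrict (\<lambda>x. c \<noteq> odd (card {i\<in>{..<m}. a i \<and> x i})) (F2_space m)"
    using assms(1) unfolding RM1_def by auto
  show ?thesis
  proof (cases "\<exists>j<m. a j")
    case True
    then obtain j where "j < m" "a j" by auto
    then show ?thesis using wt_nonconst v by auto
  next
    case False
    then have "v = restrict (\<lambda>x. c) (F2_space m)" using v const_fun[of m a c] by auto
    then show ?thesis by (cases c) auto
  qed
qed

lemma const_in: "restrict (\<lambda>x. c) (F2_space m) \<in> RM1 m"
proof -
  have "restrict (\<lambda>x. c \<noteq> odd (card {i\<in>{..<m}. (\<lambda>_. False) i \<and> x i})) (F2_space m) \<in> RM1 m"
    unfolding RM1_def mem_Collect_eq by (intro exI[of _ "\<lambda>_. False"] exI[of _ c]) simp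
  moreover have "(\<lambda>x. c \<noteq> odd (card {i\<in>{..<m}. (\<lambda>_. False) i \<and> x i})) = (\<lambda>x. c)"
    by (rule const_fun) auto
  ultimately show ?thesis by simp
qed

lemma filter_three:
  fixes f :: "nat \<Rightarrow> nat"
  assumes "0 < h" "h < n" "\<And>w. w \<notin> {0, h, n} \<Longrightarrow> f w = 0"
    "f 0 \<noteq> 0" "f h \<noteq> 0" "f n \<noteq> 0"
  shows "filter (\<lambda>a. a \<noteq> 0) (map f [0..<n + 1]) = [f 0, f h, f n]"
proof -
  have "filter (\<lambda>i. f i \<noteq> 0) [0..<n+1] = [0, h, n]"
  proof (rule sorted_distinct_set_unique)
    show "set (filter (\<lambda>i. f i \<noteq> 0) [0..<n+1]) = set [0, h, n]"
      using assms by (auto simp: less_Suc_eq_le)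
    show "sorted (filter (\<lambda>i. f i \<noteq> 0) [0..<n+1])" using sorted_upt[of 0 "n+1"] by (rule sorted_wrt_filter)
    show "distinct (filter (\<lambda>i. f i \<noteq> 0) [0..<n+1])" by simp
  qed (use assms in auto)
  then show ?thesis by (simp only: filter_map o_def list.map)
qed

theorem mainTheorem12:
  fixes m :: nat
  assumes "1 \<le> m"
  shows "log_concave_code (RM1 m) (F2_space m)"
proof -
  define F where "F = F2_space m"
  define h :: nat where "h = 2^(m-1)"
  define n :: nat where "n = 2^m"
  define f where "f = weight_count (RM1 m) F"
  have cF: "card F = n" using F2_fin_card unfolding F_def n_def by auto
  have n2: "n = 2 * h" unfolding n_def h_def using assms
    by (cases m) auto
  have h0: "0 < h" unfolding h_def by simp
  have hn: "h < n" using n2 h0 by simp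
  let ?Z = "restrict (\<lambda>x. False) F"
  let ?T = "restrict (\<lambda>x. True) F"
  have wZ: "hweight F ?Z = 0" using wt_const[of m False] unfolding F_def by simp
  have wT: "hweight F ?T = n" using wt_const[of m True] unfolding F_def n_def by simp
  have Zin: "?Z \<in> RM1 m" using const_in unfolding F_def by blast
  have Tin: "?T \<in> RM1 m" using const_in unfolding F_def by blast
  have cases: "hweight F v = h \<or> v = ?Z \<or> v = ?T" if "v \<in> RM1 m" for v
    using RM1_cases[OF that assms] unfolding F_def h_def by auto
  have c2: "hweight F v = h \<or> (v = ?Z \<and> hweight F v = 0) \<or> (v = ?T \<and> hweight F v = n)"
    if "v \<in> RM1 m" for v
    using cases[OF that]
  proof (elim disjE)
    assume "hweight F v = h" then show ?thesis by simp
  next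
    assume "v = ?Z" then show ?thesis using wZ by simp
  next
    assume "v = ?T" then show ?thesis using wT by simp
  qed
  have f0: "f 0 = 1"
  proof -
    have "{v \<in> RM1 m. hweight F v = 0} = {?Z}"
    proof (intro set_eqI iffI)
      fix v assume "v \<in> {v \<in> RM1 m. hweight F v = 0}"
      then have "v \<in> RM1 m" "hweight F v = 0" by simp_all
      then show "v \<in> {?Z}" using c2[of v] h0 hn by auto
    next
      fix v assume "v \<in> {?Z}"
      then show "v \<in> {v \<in> RM1 m. hweight F v = 0}" using Zin wZ by simp
    qed
    then show ?thesis unfolding f_def weight_count_def by simp
  qed
  have fn: "f n = 1"
  proof -
    have "{v \<in> RM1 m. hweight F v = n} = {?T}"
    proof (intro set_eqI iffI)
      fix v assume "v \<in> {v \<in> RM1 m. hweight F v = n}"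
      then have "v \<in> RM1 m" "hweight F v = n" by simp_all
      then show "v \<in> {?T}" using c2[of v] h0 hn by auto
    next
      fix v assume "v \<in> {?T}"
      then show "v \<in> {v \<in> RM1 m. hweight F v = n}" using Tin wT by simp
    qed
    then show ?thesis unfolding f_def weight_count_def by simp
  qed
  have fw: "f w = 0" if "w \<notin> {0, h, n}" for w
  proof -
    have "{v \<in> RM1 m. hweight F v = w} = {}"
    proof (intro set_eqI iffI)
      fix v assume "v \<in> {v \<in> RM1 m. hweight F v = w}"
      then have "v \<in> RM1 m" "hweight F v = w" by simp_all
      then show "v \<in> {}" using c2[of v] that by auto
    qed simp
    then show ?thesis unfolding f_def weight_count_def by (metis card.empty)
  qed
  have fh: "f h \<noteq> 0"
  proof -
    let ?W = "restrict (\<lambda>x. False \<noteq> odd (card {i\<in>{..<m}. (\<lambda>i. i = 0) i \<and> x i})) (F2_space m)"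
    have "?W \<in> RM1 m" unfolding RM1_def mem_Collect_eq by (intro exI[of _ "\<lambda>i. i = 0"] exI[of _ False]) simp
    moreover have "hweight F ?W = h" unfolding F_def h_def
      by (rule wt_nonconst[of 0]) (use assms in auto)
    ultimately have "?W \<in> {v \<in> RM1 m. hweight F v = h}" by simp
    moreover have "finite {v \<in> RM1 m. hweight F v = h}" using RM1_finite by simp
    ultimately have "0 < card {v \<in> RM1 m. hweight F v = h}"
      using card_gt_0_iff by blast
    then show ?thesis unfolding f_def weight_count_def by simp
  qed
  have L: "nonzero_weight_distribution (RM1 m) F = [1, f h, 1]"
    unfolding nonzero_weight_distribution_def cF f_def[symmetric]
    using filter_three[of h n f, OF h0 hn fw] f0 fn fh by simp
  show ?thesis unfolding log_concave_code_def F_def[symmetric] L Let_def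
  proof (intro allI impI)
    fix i assume "1 \<le> i \<and> i + 1 < length [1, f h, 1]"
    then have "i = 1" by simp
    then show "[1, f h, 1] ! (i - 1) * [1, f h, 1] ! (i + 1) \<le> ([1, f h, 1] ! i)\<^sup>2"
      using fh by (simp add: power2_eq_square Suc_leI)
  qed
qed

end
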